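(* For every integer $d\ge5$ there exists a graded Artinian level algebra $A=k[x_1,x_2,x_3]/I$ with $\dim_k A_1=3$ whose Hilbert function $(h_0,h_1,\dots)$ satisfies $h_{d-1}>h_d=h_{d+1}=2d+4$.
   Context: $k$ is an infinite field of characteristic $0$; $h_i=\dim_kA_i$. A graded Artinian algebra is level if its socle $\{a:a\mathfrak m=0\}$ ($\mathfrak m$ the maximal homogeneous ideal) is concentrated in a single degree. *)

theory Defs
  imports Main "HOL.Vector_Spaces" "HOL-Library.Poly_Mapping" "HOL-Library.Product_Plus"
begin

text \<open>The polynomial ring k[x1,x2,x3]: finitely supported functions from
exponent vectors (a,b,c) (monomial x1^a x2^b x3^c) to coefficients.\<close>

type_synonym mon3 = "nat \<times> nat \<times> nat"
type_synonym 'k poly3 = "mon3 \<Rightarrow>\<^sub>0 'k"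

definition mdeg :: "mon3 \<Rightarrow> nat" where
  "mdeg m = fst m + fst (snd m) + snd (snd m)"

definition var3 :: "nat \<Rightarrow> 'k::{zero,one} poly3" where
  "var3 j = Poly_Mapping.single
      (if j = 0 then (1,0,0) else if j = 1 then (0,1,0) else (0,0,1)) 1"

definition smult3 :: "'k::field \<Rightarrow> 'k poly3 \<Rightarrow> 'k poly3" where
  "smult3 c p = Poly_Mapping.map (\<lambda>a. c * a) p"

definition homog_part :: "nat \<Rightarrow> 'k::field poly3 set" where
  "homog_part i = {p. \<forall>m \<in> Poly_Mapping.keys p. mdeg m = i}"

definition hcomp :: "nat \<Rightarrow> 'k::field poly3 \<Rightarrow> 'k poly3" where
  "hcomp i p = Poly_Mapping.mapp (\<lambda>m a. if mdeg m = i then a else 0) p"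

definition is_ideal3 :: "'k::field poly3 set \<Rightarrow> bool" where
  "is_ideal3 I \<longleftrightarrow> 0 \<in> I \<and> (\<forall>f\<in>I. \<forall>g\<in>I. f + g \<in> I) \<and> (\<forall>f\<in>I. \<forall>r. r * f \<in> I)"

definition homogeneous_ideal3 :: "'k::field poly3 set \<Rightarrow> bool" where
  "homogeneous_ideal3 I \<longleftrightarrow> is_ideal3 I \<and> (\<forall>f\<in>I. \<forall>i. hcomp i f \<in> I)"

definition hilb3 :: "'k::field poly3 set \<Rightarrow> nat \<Rightarrow> nat" where
  "hilb3 I i = vector_space.dim smult3 (homog_part i :: 'k poly3 set)
               - vector_space.dim smult3 (I \<inter> homog_part i)"

definition artinian3 :: "'k::field poly3 set \<Rightarrow> bool" where
  "artinian3 I \<longleftrightarrow> (\<exists>N. \<forall>i\<ge>N. hilb3 I i = 0)"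

text \<open>Level: the socle is concentrated in a single degree s, i.e. every socle element
  is (modulo I) homogeneous of degree s.\<close>
definition in_socle3 :: "'k::field poly3 set \<Rightarrow> 'k poly3 \<Rightarrow> bool" where
  "in_socle3 I f \<longleftrightarrow> (\<forall>j<3. f * var3 j \<in> I)"

definition level3 :: "'k::field poly3 set \<Rightarrow> bool" where
  "level3 I \<longleftrightarrow> (\<exists>s. \<forall>f. in_socle3 I f \<longrightarrow> (\<exists>g \<in> homog_part s. f - g \<in> I))"

end

theory Submission
  imports Defs
begin

lemma lookup_smult3: "Poly_Mapping.lookup (smult3 c p) k = c * Poly_Mapping.lookup p k"
  unfolding smult3_def by transfer (auto simp: when_def)

lemma vs3: "vector_space (smult3 :: 'k::field \<Rightarrow> 'k poly3 \<Rightarrow> 'k poly3)"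
  by unfold_locales (auto intro!: poly_mapping_eqI simp: lookup_smult3 lookup_add algebra_simps)

lemma lookup_single_mult:
  fixes g :: "'k::field poly3"
  shows "Poly_Mapping.lookup (Poly_Mapping.single (a,b,c) k * g) (x,y,z) =
     (if a \<le> x \<and> b \<le> y \<and> c \<le> z then k * Poly_Mapping.lookup g (x-a,y-b,z-c) else 0)"
proof -
  have "Poly_Mapping.lookup (Poly_Mapping.single (a,b,c) k * g) (x,y,z) =
      k * (\<Sum>q. Poly_Mapping.lookup g q when (x,y,z) = (a,b,c) + q)"
    unfolding lookup_mult lookup_single by (simp add: when_mult)
  also have "(\<lambda>q. Poly_Mapping.lookup g q when (x,y,z) = (a,b,c) + q) =
     (\<lambda>q. if a \<le> x \<and> b \<le> y \<and> c \<le> z then (Poly_Mapping.lookup g q when q = (x-a,y-b,z-c)) else 0)"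
    by (auto simp: fun_eq_iff when_def)
  finally show ?thesis by (cases "a \<le> x \<and> b \<le> y \<and> c \<le> z") auto
qed

definition Vs :: "mon3 set \<Rightarrow> mon3 set set \<Rightarrow> 'k::field poly3 set" where
  "Vs S GG = {f. Poly_Mapping.keys f \<subseteq> S \<and> (\<forall>G\<in>GG. (\<Sum>m\<in>G. Poly_Mapping.lookup f m) = 0)}"

lemma dim_Vs:
  fixes S :: "mon3 set" and GG :: "mon3 set set"
  assumes finS: "finite S"
    and ne: "\<And>G. G \<in> GG \<Longrightarrow> G \<noteq> {} \<and> G \<subseteq> S"
    and disj: "\<And>G H. G \<in> GG \<Longrightarrow> H \<in> GG \<Longrightarrow> G \<noteq> H \<Longrightarrow> G \<inter> H = {}"
  shows "vector_space.dim (smult3 :: 'k::field \<Rightarrow> _) (Vs S GG :: 'k poly3 set) = card S - card GG"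
proof -
  interpret vs: vector_space "smult3 :: 'k \<Rightarrow> 'k poly3 \<Rightarrow> 'k poly3" by (rule vs3)
  define piv where "piv G = (SOME m. m \<in> G)" for G :: "mon3 set"
  have piv_in: "piv G \<in> G" if "G \<in> GG" for G
    using ne[OF that] unfolding piv_def by (auto intro: someI)
  have finG: "finite GG"
  proof -
    have "GG \<subseteq> Pow S" using ne by blast
    moreover have "finite (Pow S)" using finS by simp
    ultimately show ?thesis by (rule finite_subset)
  qed
  have injp: "inj_on piv GG"
  proof (rule inj_onI)
    fix G H assume "G \<in> GG" "H \<in> GG" "piv G = piv H"
    then have "piv G \<in> G \<inter> H" using piv_in[of G] piv_in[of H] by simp
    then show "G = H" using disj[of G H] \<open>G \<in> GG\<close> \<open>H \<in> GG\<close> by auto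
  qed
  define P where "P = piv ` GG"
  have PS: "P \<subseteq> S" unfolding P_def using piv_in ne by blast
  have cardP: "card P = card GG" unfolding P_def using injp card_image by blast
  define S' where "S' = S - P"
  have cardS': "card S' = card S - card GG"
    unfolding S'_def using PS finS cardP by (simp add: card_Diff_subset finite_subset)
  define grp where "grp m = (THE G. G \<in> GG \<and> m \<in> G)" for m
  have grp: "grp m = G" if "G \<in> GG" "m \<in> G" for m G
    unfolding grp_def
  proof (rule the_equality)
    show "G \<in> GG \<and> m \<in> G" using that by simp
    fix H assume "H \<in> GG \<and> m \<in> H"
    then show "H = G" using that disj[of H G] by blast
  qed
  define e :: "mon3 \<Rightarrow> 'k poly3" where "e m = Poly_Mapping.single m 1" for m
  define b where "b m = (if m \<in> \<Union>GG then e m - e (piv (grp m)) else e m)" for m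
  have lookup_b: "Poly_Mapping.lookup (b m) k =
      (if k = m then 1 else 0) - (if m \<in> \<Union>GG \<and> k = piv (grp m) then 1 else 0)" for m k
    unfolding b_def e_def by (auto simp: lookup_minus lookup_single when_def)
  have grp_in: "grp m \<in> GG \<and> m \<in> grp m" if mU: "m \<in> \<Union>GG" for m
  proof -
    obtain G where "G \<in> GG" "m \<in> G" using mU by blast
    then show ?thesis using grp[of G m] by simp
  qed
  have dual: "Poly_Mapping.lookup (b m) m' = (if m = m' then 1 else 0)" if "m' \<in> S'" for m m'
  proof -
    have "m' \<noteq> piv (grp m)" if "m \<in> \<Union>GG"
    proof -
      have "piv (grp m) \<in> P" unfolding P_def using grp_in[OF that] by blast
      then show ?thesis using \<open>m' \<in> S'\<close> unfolding S'_def by blast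
    qed
    then show ?thesis unfolding lookup_b by auto
  qed
  define B where "B = b ` S'"
  have injb: "inj_on b S'"
  proof (rule inj_onI)
    fix x y assume "x \<in> S'" "y \<in> S'" "b x = b y"
    then have "Poly_Mapping.lookup (b x) y = Poly_Mapping.lookup (b y) y" by simp
    then show "x = y" using dual[OF \<open>y \<in> S'\<close>] by (auto split: if_splits)
  qed
  have cardB: "card B = card S'" unfolding B_def using injb card_image by blast
  have finS': "finite S'" using finS S'_def by auto
  have keys_b: "Poly_Mapping.keys (b m) \<subseteq> S" if "m \<in> S" for m
  proof
    fix k assume "k \<in> Poly_Mapping.keys (b m)"
    then have "Poly_Mapping.lookup (b m) k \<noteq> 0" by (simp add: in_keys_iff)
    then have "k = m \<or> (m \<in> \<Union>GG \<and> k = piv (grp m))" unfolding lookup_b by (auto split: if_splits)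
    then show "k \<in> S" using that grp_in piv_in ne by blast
  qed
  have BV: "B \<subseteq> Vs S GG"
  proof
    fix v assume "v \<in> B"
    then obtain m where m: "m \<in> S'" "v = b m" unfolding B_def by auto
    have mS: "m \<in> S" using m S'_def by auto
    have "(\<Sum>k\<in>G. Poly_Mapping.lookup (b m) k) = 0" if G: "G \<in> GG" for G
    proof (cases "m \<in> G")
      case True
      then have gm: "grp m = G" using grp G by auto
      have pm: "piv G \<noteq> m" using m True G unfolding S'_def P_def by auto
      have fG: "finite G" using ne[OF G] finS finite_subset by blast
      have mU: "m \<in> \<Union>GG" using True G by blast
      have "(\<Sum>k\<in>G. Poly_Mapping.lookup (b m) k) =
            (\<Sum>k\<in>G. (if k = m then 1 else 0) - (if k = piv G then 1 else 0))"
        unfolding lookup_b gm using mU by simp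
      also have "\<dots> = (\<Sum>k\<in>G. (if k = m then 1 else 0)) - (\<Sum>k\<in>G. (if k = piv G then 1 else 0))"
        by (rule sum_subtractf)
      also have "\<dots> = 0" using True piv_in[OF G] fG by simp
      finally show ?thesis .
    next
      case False
      have "Poly_Mapping.lookup (b m) k = 0" if "k \<in> G" for k
      proof -
        have "k \<noteq> m" using that False by auto
        moreover have "k \<noteq> piv (grp m)" if mU: "m \<in> \<Union>GG"
        proof
          assume k: "k = piv (grp m)"
          have gi: "grp m \<in> GG" "m \<in> grp m" using grp_in[OF mU] by auto
          then have "k \<in> grp m" using k piv_in by simp
          then have "k \<in> G \<inter> grp m" using \<open>k \<in> G\<close> by simp
          then have "G = grp m" using disj[of G "grp m"] G gi by blast
          then show False using gi False by simp
        qed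
        ultimately show ?thesis unfolding lookup_b by auto
      qed
      then show ?thesis by simp
    qed
    then show "v \<in> Vs S GG" unfolding Vs_def using keys_b[OF mS] m by auto
  qed
  have indep: "vs.independent B"
    unfolding vs.dependent_explicit
  proof clarify
    fix t u v assume t: "finite t" "t \<subseteq> B" "(\<Sum>v\<in>t. smult3 (u v) v) = 0"
      and v: "v \<in> t" "u v \<noteq> 0"
    obtain m' where m': "m' \<in> S'" "v = b m'" using v t unfolding B_def by auto
    have "0 = Poly_Mapping.lookup (\<Sum>v\<in>t. smult3 (u v) v) m'" using t by simp
    also have "\<dots> = (\<Sum>w\<in>t. u w * Poly_Mapping.lookup w m')"
      by (simp add: lookup_sum lookup_smult3)
    also have "\<dots> = (\<Sum>w\<in>t. if w = v then u w else 0)"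
    proof (rule sum.cong[OF refl])
      fix w assume "w \<in> t"
      then obtain m where mm: "m \<in> S'" "w = b m" using t unfolding B_def by auto
      have "(w = v) = (m = m')" using injb mm m' by (auto simp: inj_on_def)
      then show "u w * Poly_Mapping.lookup w m' = (if w = v then u w else 0)"
        using dual[OF m'(1), of m] mm by simp
    qed
    also have "\<dots> = u v" using v t by simp
    finally show False using v by simp
  qed
  have spanV: "Vs S GG \<subseteq> vs.span B"
  proof
    fix f :: "'k poly3" assume f: "f \<in> Vs S GG"
    have keysf: "Poly_Mapping.keys f \<subseteq> S" and sumf: "\<And>G. G \<in> GG \<Longrightarrow> (\<Sum>m\<in>G. Poly_Mapping.lookup f m) = 0"
      using f unfolding Vs_def by auto
    have eq: "f = (\<Sum>m\<in>S'. smult3 (Poly_Mapping.lookup f m) (b m))"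
    proof (rule poly_mapping_eqI)
      fix k
      have R: "Poly_Mapping.lookup (\<Sum>m\<in>S'. smult3 (Poly_Mapping.lookup f m) (b m)) k
          = (\<Sum>m\<in>S'. Poly_Mapping.lookup f m * Poly_Mapping.lookup (b m) k)"
        by (simp add: lookup_sum lookup_smult3)
      have "k \<in> S' \<or> k \<notin> S \<or> k \<in> P" unfolding S'_def by blast
      moreover
      { assume k: "k \<in> S'"
        have "(\<Sum>m\<in>S'. Poly_Mapping.lookup f m * Poly_Mapping.lookup (b m) k)
            = (\<Sum>m\<in>S'. if m = k then Poly_Mapping.lookup f m else 0)"
          using dual[OF k] by (intro sum.cong) auto
        also have "\<dots> = Poly_Mapping.lookup f k" using k finS' by simp
        finally have "Poly_Mapping.lookup f k = Poly_Mapping.lookup (\<Sum>m\<in>S'. smult3 (Poly_Mapping.lookup f m) (b m)) k" using R by simp }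
      moreover
      { assume k: "k \<notin> S"
        have "Poly_Mapping.lookup (b m) k = 0" if "m \<in> S'" for m
          using keys_b[of m] that k unfolding S'_def by (auto simp: in_keys_iff)
        then have "(\<Sum>m\<in>S'. Poly_Mapping.lookup f m * Poly_Mapping.lookup (b m) k) = 0" by simp
        moreover have "Poly_Mapping.lookup f k = 0" using keysf k by (auto simp: in_keys_iff)
        ultimately have "Poly_Mapping.lookup f k = Poly_Mapping.lookup (\<Sum>m\<in>S'. smult3 (Poly_Mapping.lookup f m) (b m)) k" using R by simp }
      moreover
      { assume k: "k \<in> P"
        then obtain G where G: "G \<in> GG" "k = piv G" unfolding P_def by blast
        have fG: "finite G" using ne[OF G(1)] finS finite_subset by blast
        have kS': "k \<notin> S'" using k unfolding S'_def by blast
        have GS': "G \<inter> S' = G - {k}"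
        proof
          show "G \<inter> S' \<subseteq> G - {k}" using kS' by blast
          show "G - {k} \<subseteq> G \<inter> S'"
          proof
            fix m assume m: "m \<in> G - {k}"
            have "m \<notin> P"
            proof
              assume "m \<in> P"
              then obtain H where H: "H \<in> GG" "m = piv H" unfolding P_def by blast
              then have "m \<in> H \<inter> G" using piv_in m by blast
              then have "H = G" using disj[of H G] H G by blast
              then show False using m H G by simp
            qed
            then show "m \<in> G \<inter> S'" using m ne[OF G(1)] unfolding S'_def by blast
          qed
        qed
        have lb: "Poly_Mapping.lookup (b m) k = (if m \<in> G then -1 else 0)" if m: "m \<in> S'" for m
        proof -
          have "m \<noteq> k" using m kS' by blast
          moreover have "(m \<in> \<Union>GG \<and> k = piv (grp m)) = (m \<in> G)"
          proof
            assume a: "m \<in> \<Union>GG \<and> k = piv (grp m)"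
            then have "grp m = G" using injp grp_in G unfolding inj_on_def by metis
            then show "m \<in> G" using grp_in a by metis
          next
            assume "m \<in> G"
            then show "m \<in> \<Union>GG \<and> k = piv (grp m)" using grp[OF G(1)] G by auto
          qed
          ultimately show ?thesis unfolding lookup_b by simp
        qed
        have "(\<Sum>m\<in>S'. Poly_Mapping.lookup f m * Poly_Mapping.lookup (b m) k)
            = (\<Sum>m\<in>S'. if m \<in> G then - Poly_Mapping.lookup f m else 0)"
          using lb by (intro sum.cong) auto
        also have "\<dots> = (\<Sum>m\<in>S' \<inter> G. - Poly_Mapping.lookup f m)"
          using finS' by (simp add: sum.inter_restrict)
        also have "\<dots> = - (\<Sum>m\<in>G - {k}. Poly_Mapping.lookup f m)"
          using GS' by (simp add: Int_commute sum_negf)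
        also have "\<dots> = Poly_Mapping.lookup f k"
        proof -
          have "k \<in> G" using G piv_in by simp
          then have "(\<Sum>m\<in>G. Poly_Mapping.lookup f m) = Poly_Mapping.lookup f k + (\<Sum>m\<in>G - {k}. Poly_Mapping.lookup f m)"
            using fG by (simp add: sum.remove)
          then show ?thesis using sumf[OF G(1)] by (simp add: add_eq_0_iff neg_equal_iff_equal)
        qed
        finally have "Poly_Mapping.lookup f k = Poly_Mapping.lookup (\<Sum>m\<in>S'. smult3 (Poly_Mapping.lookup f m) (b m)) k" using R by simp }
      ultimately show "Poly_Mapping.lookup f k = Poly_Mapping.lookup (\<Sum>m\<in>S'. smult3 (Poly_Mapping.lookup f m) (b m)) k"
        by blast
    qed
    have "(\<Sum>m\<in>S'. smult3 (Poly_Mapping.lookup f m) (b m)) \<in> vs.span B"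
      by (intro vs.span_sum vs.span_scale vs.span_base) (auto simp: B_def)
    then show "f \<in> vs.span B" using eq by simp
  qed
  have "card B = vs.dim (Vs S GG)" by (rule vs.basis_card_eq_dim[OF BV spanV indep])
  then show ?thesis using cardB cardS' by simp
qed

lemma Rsum: "(p :: 'k::field poly3) = (\<Sum>\<mu>\<in>Poly_Mapping.keys p. Poly_Mapping.single \<mu> (Poly_Mapping.lookup p \<mu>))"
proof (rule poly_mapping_eqI)
  fix k
  show "Poly_Mapping.lookup p k = Poly_Mapping.lookup (\<Sum>\<mu>\<in>Poly_Mapping.keys p. Poly_Mapping.single \<mu> (Poly_Mapping.lookup p \<mu>)) k"
    by (cases "k \<in> Poly_Mapping.keys p") (simp_all add: lookup_sum lookup_single when_def in_keys_iff)
qed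

lemma Lsc: "Poly_Mapping.lookup (Poly_Mapping.single n c * (f :: 'k::field poly3)) m
   = c * Poly_Mapping.lookup (Poly_Mapping.single n 1 * f) m"
  by (cases n; cases m) (simp add: lookup_single_mult)

lemma Lmul: "Poly_Mapping.lookup (Poly_Mapping.single \<nu> 1 * (r * (f :: 'k::field poly3))) m
   = (\<Sum>\<mu>\<in>Poly_Mapping.keys r. Poly_Mapping.lookup r \<mu> * Poly_Mapping.lookup (Poly_Mapping.single (\<nu> + \<mu>) 1 * f) m)"
proof -
  have "r * f = (\<Sum>\<mu>\<in>Poly_Mapping.keys r. Poly_Mapping.single \<mu> (Poly_Mapping.lookup r \<mu>)) * f"
    by (rule arg_cong[where f="\<lambda>x. x * f"], rule Rsum)
  then have "Poly_Mapping.single \<nu> 1 * (r * f) =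
     (\<Sum>\<mu>\<in>Poly_Mapping.keys r. Poly_Mapping.single (\<nu> + \<mu>) (Poly_Mapping.lookup r \<mu>) * f)"
    by (simp add: sum_distrib_left sum_distrib_right mult.assoc[symmetric] mult_single)
  then show ?thesis by (simp only: lookup_sum) (intro sum.cong refl Lsc)
qed

definition strip :: "nat \<Rightarrow> mon3 set" where
  "strip n = {m. mdeg m = n \<and> snd (snd m) \<le> 1}"

definition ev0 :: "nat \<Rightarrow> 'k::field poly3 \<Rightarrow> 'k" where
  "ev0 d f = Poly_Mapping.lookup f (0,0,d+1) + Poly_Mapping.lookup f (0,d-1,2) + Poly_Mapping.lookup f (d-3,1,3)"

definition cnd :: "nat \<Rightarrow> mon3 \<Rightarrow> 'k::field poly3 \<Rightarrow> bool" where
  "cnd d \<nu> f \<longleftrightarrow> (\<forall>m\<in>strip (d+1). Poly_Mapping.lookup (Poly_Mapping.single \<nu> 1 * f) m = 0)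
      \<and> ev0 d (Poly_Mapping.single \<nu> 1 * f) = 0"

definition Jd :: "nat \<Rightarrow> 'k::field poly3 set" where
  "Jd d = {f. \<forall>\<nu>. cnd d \<nu> f}"

lemma ev0_add: "ev0 d (f + g) = ev0 d f + ev0 d g"
  by (simp add: ev0_def lookup_add)
lemma ev0_diff: "ev0 d (f - g) = ev0 d f - ev0 d g"
  by (simp add: ev0_def lookup_minus)

lemma ev0_mul: "ev0 d (Poly_Mapping.single \<nu> 1 * (r * (f :: 'k::field poly3)))
   = (\<Sum>\<mu>\<in>Poly_Mapping.keys r. Poly_Mapping.lookup r \<mu> * ev0 d (Poly_Mapping.single (\<nu> + \<mu>) 1 * f))"
  unfolding ev0_def Lmul by (simp add: sum.distrib distrib_left)

lemma is_ideal_Id: "is_ideal3 (Jd d :: 'k::field poly3 set)"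
  unfolding is_ideal3_def
proof (intro conjI ballI allI)
  show "0 \<in> (Jd d :: 'k poly3 set)" by (simp add: Jd_def cnd_def ev0_def)
next
  fix f g :: "'k poly3" assume "f \<in> Jd d" "g \<in> Jd d"
  then show "f + g \<in> Jd d"
    by (simp add: Jd_def cnd_def distrib_left lookup_add ev0_add)
next
  fix f r :: "'k poly3" assume f: "f \<in> Jd d"
  show "r * f \<in> Jd d" unfolding Jd_def cnd_def
  proof (intro CollectI allI conjI ballI)
    fix \<nu> m assume "m \<in> strip (d+1)"
    then have "\<And>\<mu>. Poly_Mapping.lookup (Poly_Mapping.single (\<nu> + \<mu>) 1 * f) m = 0"
      using f unfolding Jd_def cnd_def by blast
    then show "Poly_Mapping.lookup (Poly_Mapping.single \<nu> 1 * (r * f)) m = 0"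
      by (simp add: Lmul)
  next
    fix \<nu>
    have "\<And>\<mu>. ev0 d (Poly_Mapping.single (\<nu> + \<mu>) 1 * f) = 0"
      using f unfolding Jd_def cnd_def by blast
    then show "ev0 d (Poly_Mapping.single \<nu> 1 * (r * f)) = 0"
      by (simp add: ev0_mul)
  qed
qed

lemma mdeg3[simp]: "mdeg (a,b,c) = a + b + c" by (simp add: mdeg_def)

lemma lookup_hcomp: "Poly_Mapping.lookup (hcomp i f) k = (if mdeg k = i then Poly_Mapping.lookup f k else 0)"
  unfolding hcomp_def lookup_mapp by (auto simp: when_def in_keys_iff)

lemma Lhc: "mdeg m = s \<Longrightarrow> Poly_Mapping.lookup (Poly_Mapping.single \<nu> 1 * hcomp i (f :: 'k::field poly3)) m
   = (if mdeg \<nu> + i = s then Poly_Mapping.lookup (Poly_Mapping.single \<nu> 1 * f) m else 0)"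
  by (cases \<nu>; cases m) (auto simp: lookup_single_mult lookup_hcomp)

lemma hp_zero: "f \<in> homog_part n \<Longrightarrow> mdeg k \<noteq> n \<Longrightarrow> Poly_Mapping.lookup f k = 0"
  unfolding homog_part_def by (auto simp: in_keys_iff)

lemma Ldeg: "(f :: 'k::field poly3) \<in> homog_part n \<Longrightarrow> Poly_Mapping.lookup (Poly_Mapping.single \<nu> 1 * f) m \<noteq> 0
   \<Longrightarrow> mdeg m = mdeg \<nu> + n"
proof -
  assume f: "f \<in> homog_part n" and nz: "Poly_Mapping.lookup (Poly_Mapping.single \<nu> 1 * f) m \<noteq> 0"
  obtain a b c where nu: "\<nu> = (a,b,c)" by (cases \<nu>) auto
  obtain x y z where m: "m = (x,y,z)" by (cases m) auto
  from nz have le: "a \<le> x \<and> b \<le> y \<and> c \<le> z" and nz2: "Poly_Mapping.lookup f (x-a,y-b,z-c) \<noteq> 0"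
    unfolding nu m lookup_single_mult by (auto split: if_splits)
  from hp_zero[OF f] nz2 have "mdeg (x-a,y-b,z-c) = n" by blast
  then show ?thesis using le unfolding nu m by (simp only: mdeg3) linarith
qed

lemma strip_deg: "m \<in> strip n \<Longrightarrow> mdeg m = n" by (simp add: strip_def)

lemma ev0_hc: "d \<ge> 5 \<Longrightarrow> ev0 d (Poly_Mapping.single \<nu> 1 * hcomp i (f :: 'k::field poly3))
   = (if mdeg \<nu> + i = d + 1 then ev0 d (Poly_Mapping.single \<nu> 1 * f) else 0)"
  unfolding ev0_def by (subst Lhc, simp)+ (auto simp: Lhc)

lemma homog_Id: "d \<ge> 5 \<Longrightarrow> f \<in> Jd d \<Longrightarrow> hcomp i (f :: 'k::field poly3) \<in> Jd d"
  unfolding Jd_def cnd_def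
  by (auto simp: Lhc[OF strip_deg] ev0_hc)

lemma homogeneous_Id: "d \<ge> 5 \<Longrightarrow> homogeneous_ideal3 (Jd d :: 'k::field poly3 set)"
  unfolding homogeneous_ideal3_def using is_ideal_Id homog_Id by blast

lemma high_in_Id: "d \<ge> 5 \<Longrightarrow> n \<ge> d + 2 \<Longrightarrow> homog_part n \<subseteq> (Jd d :: 'k::field poly3 set)"
proof
  fix f :: "'k poly3" assume d: "d \<ge> 5" and n: "n \<ge> d + 2" and f: "f \<in> homog_part n"
  have z: "Poly_Mapping.lookup (Poly_Mapping.single \<nu> 1 * f) m = 0" if "mdeg m = d + 1" for \<nu> m
    using Ldeg[OF f, of \<nu> m] that n by linarith
  show "f \<in> Jd d" unfolding Jd_def cnd_def ev0_def
    using d by (auto simp: z strip_deg)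
qed

lemma artinian_Id: "d \<ge> 5 \<Longrightarrow> artinian3 (Jd d :: 'k::field poly3 set)"
  unfolding artinian3_def hilb3_def
proof (intro exI[of _ "d+2"] allI impI)
  fix i assume "d \<ge> 5" "d + 2 \<le> i"
  then show "vector_space.dim smult3 (homog_part i :: 'k poly3 set) - vector_space.dim smult3 (Jd d \<inter> homog_part i :: 'k poly3 set) = 0"
  proof -
    have "homog_part i \<subseteq> (Jd d :: 'k poly3 set)" using high_in_Id \<open>d \<ge> 5\<close> \<open>d + 2 \<le> i\<close> by blast
    then have "Jd d \<inter> homog_part i = (homog_part i :: 'k poly3 set)" by blast
    then show ?thesis by simp
  qed
qed

lemma Lsplit: "\<nu> \<noteq> 0 \<Longrightarrow> \<exists>j<3. \<exists>\<nu>'. \<forall>h :: 'k::field poly3.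
   Poly_Mapping.single \<nu> 1 * h = Poly_Mapping.single \<nu>' 1 * (h * var3 j)"
proof -
  assume nz: "\<nu> \<noteq> 0"
  obtain a b c where nu: "\<nu> = (a,b,c)" by (cases \<nu>) auto
  have key: "\<forall>h :: 'k poly3. Poly_Mapping.single \<nu> 1 * h = Poly_Mapping.single \<nu>' 1 * (h * var3 j)"
    if "\<nu> = \<nu>' + (if j = 0 then (1,0,0) else if j = 1 then (0,1,0) else (0,0,1))" for \<nu>' j
    unfolding var3_def using that by (simp add: mult.commute mult.left_commute mult_single)
  show ?thesis
  proof (cases "a > 0")
    case True
    have "\<forall>h :: 'k poly3. Poly_Mapping.single \<nu> 1 * h = Poly_Mapping.single (a-1,b,c) 1 * (h * var3 0)"
      using key[of "(a-1,b,c)" 0] nu True by simp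
    moreover have "(0::nat) < 3" by simp
    ultimately show ?thesis by blast
  next
    case False
    show ?thesis
    proof (cases "b > 0")
      case True
      have "\<forall>h :: 'k poly3. Poly_Mapping.single \<nu> 1 * h = Poly_Mapping.single (a,b-1,c) 1 * (h * var3 1)"
        using key[of "(a,b-1,c)" 1] nu True False by simp
      moreover have "(1::nat) < 3" by simp
      ultimately show ?thesis by blast
    next
      case False2: False
      then have "c > 0" using nz nu False by (auto simp: zero_prod_def)
      have "\<forall>h :: 'k poly3. Poly_Mapping.single \<nu> 1 * h = Poly_Mapping.single (a,b,c-1) 1 * (h * var3 2)"
        using key[of "(a,b,c-1)" 2] nu \<open>c > 0\<close> False False2 by simp
      moreover have "(2::nat) < 3" by simp
      ultimately show ?thesis by blast
    qed
  qed
qed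

lemma level_Id: "d \<ge> 5 \<Longrightarrow> level3 (Jd d :: 'k::field poly3 set)"
  unfolding level3_def
proof (intro exI[of _ "d+1"] allI impI)
  fix f :: "'k poly3" assume d: "d \<ge> 5" and soc: "in_socle3 (Jd d) f"
  define g where "g = hcomp (d+1) f"
  have g: "g \<in> homog_part (d+1)"
    unfolding homog_part_def g_def
  proof (intro CollectI ballI)
    fix m assume "m \<in> Poly_Mapping.keys (hcomp (d + 1) f)"
    then show "mdeg m = d + 1" by (auto simp: in_keys_iff lookup_hcomp split: if_splits)
  qed
  have "cnd d \<nu> (f - g)" for \<nu>
  proof (cases "\<nu> = 0")
    case True
    have z: "Poly_Mapping.lookup (Poly_Mapping.single \<nu> 1 * (f - g)) m = 0" if "mdeg m = d + 1" for m
      using that True unfolding g_def by (simp add: lookup_minus lookup_hcomp)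
    show ?thesis unfolding cnd_def ev0_def using d by (auto simp: z strip_deg)
  next
    case False
    then obtain j \<nu>' where j: "j < 3" and sp: "\<And>h :: 'k poly3. Poly_Mapping.single \<nu> 1 * h = Poly_Mapping.single \<nu>' 1 * (h * var3 j)"
      using Lsplit by blast
    have c1: "cnd d \<nu>' (f * var3 j)" using soc j unfolding in_socle3_def Jd_def by blast
    have c2: "Poly_Mapping.lookup (Poly_Mapping.single \<nu> 1 * g) m = 0" if "mdeg m = d + 1" for m
    proof (rule ccontr)
      assume "Poly_Mapping.lookup (Poly_Mapping.single \<nu> 1 * g) m \<noteq> 0"
      from Ldeg[OF g this] that have "mdeg \<nu> = 0" by simp
      then show False using False by (cases \<nu>) (auto simp: zero_prod_def)
    qed
    have eq: "Poly_Mapping.single \<nu> 1 * (f - g) = Poly_Mapping.single \<nu>' 1 * (f * var3 j) - Poly_Mapping.single \<nu> 1 * g"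
      by (simp add: right_diff_distrib sp[of f])
    show ?thesis using c1 d unfolding cnd_def eq ev0_def
      by (auto simp: lookup_minus c2 strip_deg)
  qed
  then have "f - g \<in> Jd d" unfolding Jd_def by blast
  then show "\<exists>g\<in>homog_part (d + 1). f - g \<in> Jd d" using g by blast
qed

definition mons :: "nat \<Rightarrow> mon3 set" where "mons n = {m. mdeg m = n}"

lemma finite_mons: "finite (mons n)"
proof -
  have "mons n \<subseteq> {..n} \<times> {..n} \<times> {..n}" unfolding mons_def mdeg_def by auto
  then show ?thesis by (rule finite_subset) auto
qed

lemma strip_mons: "strip n \<subseteq> mons n" unfolding strip_def mons_def by auto

lemma hp_Vs: "homog_part n = Vs (mons n) {}"
  unfolding homog_part_def Vs_def mons_def by auto

lemma card_disj_le:
  fixes S :: "'a set" and GG :: "'a set set"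
  assumes finS: "finite S"
    and ne: "\<And>G. G \<in> GG \<Longrightarrow> G \<noteq> {} \<and> G \<subseteq> S"
    and disj: "\<And>G H. G \<in> GG \<Longrightarrow> H \<in> GG \<Longrightarrow> G \<noteq> H \<Longrightarrow> G \<inter> H = {}"
  shows "card GG \<le> card S"
proof -
  define piv where "piv G = (SOME m. m \<in> G)" for G :: "'a set"
  have piv_in: "piv G \<in> G" if "G \<in> GG" for G
    using ne[OF that] unfolding piv_def by (auto intro: someI)
  have injp: "inj_on piv GG"
  proof (rule inj_onI)
    fix G H assume "G \<in> GG" "H \<in> GG" "piv G = piv H"
    then have "piv G \<in> G \<inter> H" using piv_in[of G] piv_in[of H] by simp
    then show "G = H" using disj[of G H] \<open>G \<in> GG\<close> \<open>H \<in> GG\<close> by auto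
  qed
  have "piv ` GG \<subseteq> S" using piv_in ne by blast
  then have "card (piv ` GG) \<le> card S" using finS by (simp add: card_mono)
  then show ?thesis using card_image[OF injp] by simp
qed

lemma hilb_Vs:
  assumes "Jd d \<inter> homog_part n = (Vs (mons n) GG :: 'k::field poly3 set)"
    and ne: "\<And>G. G \<in> GG \<Longrightarrow> G \<noteq> {} \<and> G \<subseteq> mons n"
    and disj: "\<And>G H. G \<in> GG \<Longrightarrow> H \<in> GG \<Longrightarrow> G \<noteq> H \<Longrightarrow> G \<inter> H = {}"
  shows "hilb3 (Jd d :: 'k poly3 set) n = card GG"
proof -
  have a: "vector_space.dim smult3 (homog_part n :: 'k poly3 set) = card (mons n)"
    unfolding hp_Vs using dim_Vs[of "mons n" "{}", where 'k='k] finite_mons by simp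
  have b: "vector_space.dim smult3 (Jd d \<inter> homog_part n :: 'k poly3 set) = card (mons n) - card GG"
    unfolding assms(1) using dim_Vs[of "mons n" GG, where 'k='k] finite_mons ne disj by blast
  have c: "card GG \<le> card (mons n)" using card_disj_le[OF finite_mons ne disj] by blast
  show ?thesis unfolding hilb3_def a b using c by simp
qed

lemma card_strip: "n \<ge> 1 \<Longrightarrow> card (strip n) = 2 * n + 1"
proof -
  assume n: "n \<ge> 1"
  have e: "strip n = (\<lambda>a. (a, n - a, 0)) ` {..n} \<union> (\<lambda>a. (a, n - 1 - a, 1)) ` {..n-1}"
  proof
    show "strip n \<subseteq> (\<lambda>a. (a, n - a, 0)) ` {..n} \<union> (\<lambda>a. (a, n - 1 - a, 1)) ` {..n-1}"
    proof
      fix m assume "m \<in> strip n"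
      then obtain a b c where m: "m = (a,b,c)" "a + b + c = n" "c \<le> 1" unfolding strip_def by (cases m) auto
      then show "m \<in> (\<lambda>a. (a, n - a, 0)) ` {..n} \<union> (\<lambda>a. (a, n - 1 - a, 1)) ` {..n-1}"
        by (cases c) (auto simp: image_iff)
    qed
    show "(\<lambda>a. (a, n - a, 0)) ` {..n} \<union> (\<lambda>a. (a, n - 1 - a, 1)) ` {..n-1} \<subseteq> strip n"
      using n unfolding strip_def by auto
  qed
  have "card ((\<lambda>a. (a, n - a, 0::nat)) ` {..n}) = n + 1"
    by (subst card_image) (auto simp: inj_on_def)
  moreover have "card ((\<lambda>a. (a, n - 1 - a, 1::nat)) ` {..n-1}) = n"
    using n by (subst card_image) (auto simp: inj_on_def)
  moreover have "(\<lambda>a. (a, n - a, 0::nat)) ` {..n} \<inter> (\<lambda>a. (a, n - 1 - a, 1)) ` {..n-1} = {}" by auto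
  ultimately show ?thesis unfolding e by (simp add: card_Un_disjoint)
qed

lemma Jd_strip:
  assumes f: "(f :: 'k::field poly3) \<in> Jd d" and m: "m \<in> strip n" and n: "n \<le> d + 1"
  shows "Poly_Mapping.lookup f m = 0"
proof -
  obtain x y z where mm: "m = (x,y,z)" by (cases m) auto
  have "(x + (d + 1 - n), y, z) \<in> strip (d+1)" using m n unfolding mm strip_def by auto
  then have "Poly_Mapping.lookup (Poly_Mapping.single (d + 1 - n, 0, 0) 1 * f) (x + (d + 1 - n), y, z) = 0"
    using f unfolding Jd_def cnd_def by blast
  then show ?thesis unfolding mm lookup_single_mult by simp
qed

lemma char_Jd:
  assumes d: "d \<ge> 5" and n: "n \<le> d + 1"
    and iff: "\<And>f :: 'k::field poly3. Poly_Mapping.keys f \<subseteq> mons n \<Longrightarrow> (\<forall>m\<in>strip n. Poly_Mapping.lookup f m = 0) \<Longrightarrow>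
       ((\<forall>\<nu>. mdeg \<nu> + n = d + 1 \<longrightarrow> ev0 d (Poly_Mapping.single \<nu> 1 * f) = 0) \<longleftrightarrow>
        (\<forall>G\<in>E. (\<Sum>m\<in>G. Poly_Mapping.lookup f m) = 0))"
  shows "Jd d \<inter> homog_part n = (Vs (mons n) ((\<lambda>m. {m}) ` strip n \<union> E) :: 'k poly3 set)"
proof
  show "Jd d \<inter> homog_part n \<subseteq> (Vs (mons n) ((\<lambda>m. {m}) ` strip n \<union> E) :: 'k poly3 set)"
  proof
    fix f :: "'k poly3" assume f: "f \<in> Jd d \<inter> homog_part n"
    have keys: "Poly_Mapping.keys f \<subseteq> mons n" using f unfolding homog_part_def mons_def by auto
    have st: "\<forall>m\<in>strip n. Poly_Mapping.lookup f m = 0" using f Jd_strip n by blast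
    have "\<forall>\<nu>. mdeg \<nu> + n = d + 1 \<longrightarrow> ev0 d (Poly_Mapping.single \<nu> 1 * f) = 0"
      using f unfolding Jd_def cnd_def by blast
    then have "\<forall>G\<in>E. (\<Sum>m\<in>G. Poly_Mapping.lookup f m) = 0" using iff[OF keys st] by blast
    then show "f \<in> Vs (mons n) ((\<lambda>m. {m}) ` strip n \<union> E)"
      unfolding Vs_def using keys st by auto
  qed
  show "(Vs (mons n) ((\<lambda>m. {m}) ` strip n \<union> E) :: 'k poly3 set) \<subseteq> Jd d \<inter> homog_part n"
  proof
    fix f :: "'k poly3" assume f: "f \<in> Vs (mons n) ((\<lambda>m. {m}) ` strip n \<union> E)"
    have keys: "Poly_Mapping.keys f \<subseteq> mons n" using f unfolding Vs_def by auto
    have st: "\<forall>m\<in>strip n. Poly_Mapping.lookup f m = 0"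
    proof
      fix m assume "m \<in> strip n"
      then have "{m} \<in> (\<lambda>m. {m}) ` strip n \<union> E" by blast
      then have "(\<Sum>k\<in>{m}. Poly_Mapping.lookup f k) = 0" using f unfolding Vs_def by blast
      then show "Poly_Mapping.lookup f m = 0" by simp
    qed
    have Ec: "\<forall>G\<in>E. (\<Sum>m\<in>G. Poly_Mapping.lookup f m) = 0" using f unfolding Vs_def by auto
    have hp: "f \<in> homog_part n" using keys unfolding homog_part_def mons_def by auto
    have ev: "\<forall>\<nu>. mdeg \<nu> + n = d + 1 \<longrightarrow> ev0 d (Poly_Mapping.single \<nu> 1 * f) = 0"
      using iff[OF keys st] Ec by blast
    have "cnd d \<nu> f" for \<nu>
    proof -
      have s1: "Poly_Mapping.lookup (Poly_Mapping.single \<nu> 1 * f) m = 0" if m: "m \<in> strip (d+1)" for m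
      proof -
        obtain a b c where nu: "\<nu> = (a,b,c)" by (cases \<nu>) auto
        obtain x y z where mm: "m = (x,y,z)" by (cases m) auto
        show ?thesis
        proof (cases "a \<le> x \<and> b \<le> y \<and> c \<le> z")
          case True
          show ?thesis
          proof (cases "mdeg (x-a,y-b,z-c) = n")
            case True2: True
            then have "(x-a,y-b,z-c) \<in> strip n" using m unfolding mm strip_def by auto
            then show ?thesis using st True unfolding nu mm lookup_single_mult by simp
          next
            case False
            then show ?thesis using hp_zero[OF hp False] True unfolding nu mm lookup_single_mult by simp
          qed
        next
          case False
          then show ?thesis unfolding nu mm lookup_single_mult by auto
        qed
      qed
      have s2: "ev0 d (Poly_Mapping.single \<nu> 1 * f) = 0"
      proof (cases "mdeg \<nu> + n = d + 1")
        case True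
        then show ?thesis using ev by blast
      next
        case False
        have z: "Poly_Mapping.lookup (Poly_Mapping.single \<nu> 1 * f) m = 0" if "mdeg m = d + 1" for m
          using Ldeg[OF hp, of \<nu> m] that False by auto
        show ?thesis unfolding ev0_def using d by (simp add: z)
      qed
      show ?thesis unfolding cnd_def using s1 s2 by blast
    qed
    then show "f \<in> Jd d \<inter> homog_part n" using hp unfolding Jd_def by blast
  qed
qed

lemma deg0: "mdeg \<nu> = 0 \<longleftrightarrow> \<nu> = (0,0,0)"
  by (cases \<nu>) auto
lemma deg1: "mdeg \<nu> = 1 \<longleftrightarrow> \<nu> = (1,0,0) \<or> \<nu> = (0,1,0) \<or> \<nu> = (0,0,1)"
  by (cases \<nu>) (auto simp: add_is_1)
lemma deg2: "mdeg \<nu> = 2 \<longleftrightarrow> \<nu> = (2,0,0) \<or> \<nu> = (0,2,0) \<or> \<nu> = (0,0,2) \<or> \<nu> = (1,1,0) \<or> \<nu> = (1,0,1) \<or> \<nu> = (0,1,1)"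
proof (cases \<nu>)
  case (fields a b c)
  then show ?thesis by (cases a; cases b; cases c) (auto simp: numeral_2_eq_2)
qed

lemma hilb_E:
  assumes d: "d \<ge> 5" and n: "1 \<le> n" "n \<le> d + 1"
    and finE: "finite E"
    and Ene: "\<And>G. G \<in> E \<Longrightarrow> G \<noteq> {} \<and> G \<subseteq> mons n \<and> G \<inter> strip n = {}"
    and Edisj: "\<And>G H. G \<in> E \<Longrightarrow> H \<in> E \<Longrightarrow> G \<noteq> H \<Longrightarrow> G \<inter> H = {}"
    and iff: "\<And>f :: 'k::field poly3. Poly_Mapping.keys f \<subseteq> mons n \<Longrightarrow> (\<forall>m\<in>strip n. Poly_Mapping.lookup f m = 0) \<Longrightarrow>
       ((\<forall>\<nu>. mdeg \<nu> + n = d + 1 \<longrightarrow> ev0 d (Poly_Mapping.single \<nu> 1 * f) = 0) \<longleftrightarrow>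
        (\<forall>G\<in>E. (\<Sum>m\<in>G. Poly_Mapping.lookup f m) = 0))"
  shows "hilb3 (Jd d :: 'k poly3 set) n = 2 * n + 1 + card E"
proof -
  define GG where "GG = (\<lambda>m. {m}) ` strip n \<union> E"
  have ch: "Jd d \<inter> homog_part n = (Vs (mons n) GG :: 'k poly3 set)"
    unfolding GG_def by (rule char_Jd[OF d n(2) iff])
  have ne: "G \<noteq> {} \<and> G \<subseteq> mons n" if "G \<in> GG" for G
    using that Ene strip_mons unfolding GG_def by blast
  have disj: "G \<inter> H = {}" if GH: "G \<in> GG" "H \<in> GG" "G \<noteq> H" for G H
  proof -
    consider "G \<in> (\<lambda>m. {m}) ` strip n" "H \<in> (\<lambda>m. {m}) ` strip n"
      | "G \<in> (\<lambda>m. {m}) ` strip n" "H \<in> E" | "G \<in> E" "H \<in> (\<lambda>m. {m}) ` strip n" | "G \<in> E" "H \<in> E"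
      using GH unfolding GG_def by blast
    then show ?thesis
    proof cases
      case 1 then show ?thesis using GH(3) by blast
    next
      case 2 then show ?thesis using Ene[of H] by blast
    next
      case 3 then show ?thesis using Ene[of G] by blast
    next
      case 4 then show ?thesis using Edisj GH(3) by blast
    qed
  qed
  have h: "hilb3 (Jd d :: 'k poly3 set) n = card GG"
    by (rule hilb_Vs[OF ch ne disj]) auto
  have "card GG = card ((\<lambda>m. {m}) ` strip n) + card E"
    unfolding GG_def
  proof (rule card_Un_disjoint)
    show "finite ((\<lambda>m. {m}) ` strip n)" using finite_subset[OF strip_mons finite_mons] by blast
    show "finite E" by (rule finE)
    show "(\<lambda>m. {m}) ` strip n \<inter> E = {}" using Ene by blast
  qed
  moreover have "card ((\<lambda>m. {m}) ` strip n) = card (strip n)"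
    by (rule card_image) (auto simp: inj_on_def)
  ultimately show ?thesis using h card_strip n(1) by simp
qed

lemma hilb_top: "d \<ge> 5 \<Longrightarrow> hilb3 (Jd d :: 'k::field poly3 set) (d + 1) = 2 * d + 4"
proof -
  assume d: "d \<ge> 5"
  define E where "E = {{(0,0,d+1),(0,d-1,2),(d-3,1,3)} :: mon3 set}"
  have "hilb3 (Jd d :: 'k poly3 set) (d + 1) = 2 * (d + 1) + 1 + card E"
  proof (rule hilb_E[OF d])
    show "finite E" unfolding E_def by simp
    show "G \<noteq> {} \<and> G \<subseteq> mons (d + 1) \<and> G \<inter> strip (d + 1) = {}" if "G \<in> E" for G
      using that d unfolding E_def mons_def strip_def by auto
    show "G \<inter> H = {}" if "G \<in> E" "H \<in> E" "G \<noteq> H" for G H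
      using that unfolding E_def by auto
    fix f :: "'k poly3"
    show "(\<forall>\<nu>. mdeg \<nu> + (d + 1) = d + 1 \<longrightarrow> ev0 d (Poly_Mapping.single \<nu> 1 * f) = 0) \<longleftrightarrow>
        (\<forall>G\<in>E. (\<Sum>m\<in>G. Poly_Mapping.lookup f m) = 0)"
      using d unfolding E_def ev0_def by (simp add: deg0 lookup_single_mult add.assoc)
  qed (use d in auto)
  then show ?thesis unfolding E_def by simp
qed

lemma ball_singletons: "(\<forall>G\<in>(\<lambda>m. {m}) ` Z. (\<Sum>m\<in>G. g m) = (0::'a::comm_monoid_add)) \<longleftrightarrow> (\<forall>m\<in>Z. g m = 0)"
  by auto

lemma hilb_d_k: "hilb3 (Jd (k+5) :: 'k::field poly3 set) (k+5) = 2 * k + 14"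
proof -
  define d where "d = k + 5"
  have d: "d \<ge> 5" unfolding d_def by simp
  define E :: "mon3 set set" where "E = {{(k+1,1,3)}, {(0,k+3,2),(k+2,0,3)}, {(0,0,k+5),(k+2,1,2)}}"
  have cE: "card E = 3" unfolding E_def by (simp add: card_insert_if doubleton_eq_iff)
  have "hilb3 (Jd d :: 'k poly3 set) d = 2 * d + 1 + card E"
  proof (rule hilb_E[OF d])
    show "finite E" unfolding E_def by simp
    show "G \<noteq> {} \<and> G \<subseteq> mons d \<and> G \<inter> strip d = {}" if "G \<in> E" for G
    proof -
      have "G = {(k+1,1,3)} \<or> G = {(0,k+3,2),(k+2,0,3)} \<or> G = {(0,0,k+5),(k+2,1,2)}"
        using that unfolding E_def by blast
      then show ?thesis unfolding mons_def strip_def d_def by auto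
    qed
    show "G \<inter> H = {}" if "G \<in> E" "H \<in> E" "G \<noteq> H" for G H
      using that unfolding E_def by auto
    fix f :: "'k poly3"
    assume st: "\<forall>m\<in>strip d. Poly_Mapping.lookup f m = 0"
    have "(0,k+4,1) \<in> strip d" unfolding strip_def d_def by simp
    then have z: "Poly_Mapping.lookup f (0,k+4,1) = 0" using st by blast
    have dg: "(\<forall>\<nu>. mdeg \<nu> + d = d + 1 \<longrightarrow> P \<nu>) \<longleftrightarrow> P (1,0,0) \<and> P (0,1,0) \<and> P (0,0,1)" for P
    proof -
      have "mdeg \<nu> + d = d + 1 \<longleftrightarrow> mdeg \<nu> = 1" for \<nu> by arith
      then show ?thesis by (simp only: deg1 imp_disjL all_conj_distrib) simp
    qed
    have e1: "ev0 d (Poly_Mapping.single (1,0,0) 1 * f) = Poly_Mapping.lookup f (k+1,1,3)"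
      unfolding d_def by (simp add: ev0_def lookup_single_mult, (simp add: add.commute)?)
    have e2: "ev0 d (Poly_Mapping.single (0,1,0) 1 * f) = Poly_Mapping.lookup f (0,k+3,2) + Poly_Mapping.lookup f (k+2,0,3)"
      unfolding d_def by (simp add: ev0_def lookup_single_mult, (simp add: add.commute)?)
    have e3: "ev0 d (Poly_Mapping.single (0,0,1) 1 * f) = Poly_Mapping.lookup f (0,0,k+5) + Poly_Mapping.lookup f (k+2,1,2)"
      using z unfolding d_def by (simp add: ev0_def lookup_single_mult, (simp add: add.commute)?)
    show "(\<forall>\<nu>. mdeg \<nu> + d = d + 1 \<longrightarrow> ev0 d (Poly_Mapping.single \<nu> 1 * f) = 0) \<longleftrightarrow>
        (\<forall>G\<in>E. (\<Sum>m\<in>G. Poly_Mapping.lookup f m) = 0)"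
      unfolding dg e1 e2 e3 unfolding E_def by simp
  qed (use d in auto)
  then show ?thesis using cE unfolding d_def by simp
qed

lemma hilb_dm1_k: "hilb3 (Jd (k+5) :: 'k::field poly3 set) (k+5-1) = 2 * (k+5-1) + 1 + 6"
proof -
  define d where "d = k + 5"
  have d: "d \<ge> 5" unfolding d_def by simp
  have dm: "k + 4 = d - 1" unfolding d_def by simp
  define Z :: "mon3 set" where "Z = {(k,1,3), (0,k+2,2), (0,0,k+4), (k+1,0,3), (k+1,1,2), (k+2,0,2)}"
  define E :: "mon3 set set" where "E = (\<lambda>m. {m}) ` Z"
  have cZ: "card Z = 6" unfolding Z_def by (simp add: card_insert_if)
  have cE: "card E = 6" unfolding E_def using cZ by (simp add: card_image inj_on_def)
  have Zp: "mdeg m = d - 1 \<and> snd (snd m) \<ge> 2" if "m \<in> Z" for m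
  proof -
    have "m = (k,1,3) \<or> m = (0,k+2,2) \<or> m = (0,0,k+4) \<or> m = (k+1,0,3) \<or> m = (k+1,1,2) \<or> m = (k+2,0,2)"
      using that unfolding Z_def by blast
    then show ?thesis unfolding d_def by auto
  qed
  have "hilb3 (Jd d :: 'k poly3 set) (d - 1) = 2 * (d - 1) + 1 + card E"
  proof (rule hilb_E[OF d])
    show "finite E" unfolding E_def Z_def by simp
    show "G \<noteq> {} \<and> G \<subseteq> mons (d - 1) \<and> G \<inter> strip (d - 1) = {}" if "G \<in> E" for G
    proof -
      obtain m where "m \<in> Z" "G = {m}" using \<open>G \<in> E\<close> unfolding E_def by blast
      then show ?thesis using Zp[of m] unfolding mons_def strip_def by auto
    qed
    show "G \<inter> H = {}" if "G \<in> E" "H \<in> E" "G \<noteq> H" for G H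
      using that unfolding E_def by blast
    fix f :: "'k poly3"
    assume st: "\<forall>m\<in>strip (d - 1). Poly_Mapping.lookup f m = 0"
    have "(0,k+4,0) \<in> strip (d - 1)" "(k+2,1,1) \<in> strip (d - 1)" "(0,k+3,1) \<in> strip (d - 1)"
      unfolding strip_def d_def by simp_all
    then have z1: "Poly_Mapping.lookup f (0,k+4,0) = 0" and z2: "Poly_Mapping.lookup f (k+2,1,1) = 0"
      and z3: "Poly_Mapping.lookup f (0,k+3,1) = 0" using st by blast+
    have dg: "(\<forall>\<nu>. mdeg \<nu> + (d - 1) = d + 1 \<longrightarrow> P \<nu>) \<longleftrightarrow> P (2,0,0) \<and> P (0,2,0) \<and> P (0,0,2) \<and> P (1,1,0) \<and> P (1,0,1) \<and> P (0,1,1)" for P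
    proof -
      have "mdeg \<nu> + (d - 1) = d + 1 \<longleftrightarrow> mdeg \<nu> = 2" for \<nu> using d by arith
      then show ?thesis by (simp only: deg2 imp_disjL all_conj_distrib) simp
    qed
    have e1: "ev0 d (Poly_Mapping.single (2,0,0) 1 * f) = Poly_Mapping.lookup f (k,1,3)"
      unfolding d_def by (simp add: ev0_def lookup_single_mult, (simp add: add.commute)?)
    have e2: "ev0 d (Poly_Mapping.single (0,2,0) 1 * f) = Poly_Mapping.lookup f (0,k+2,2)"
      unfolding d_def by (simp add: ev0_def lookup_single_mult, (simp add: add.commute)?)
    have e3: "ev0 d (Poly_Mapping.single (0,0,2) 1 * f) = Poly_Mapping.lookup f (0,0,k+4)"
      using z1 z2 unfolding d_def by (simp add: ev0_def lookup_single_mult, (simp add: add.commute)?)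
    have e4: "ev0 d (Poly_Mapping.single (1,1,0) 1 * f) = Poly_Mapping.lookup f (k+1,0,3)"
      unfolding d_def by (simp add: ev0_def lookup_single_mult, (simp add: add.commute)?)
    have e5: "ev0 d (Poly_Mapping.single (1,0,1) 1 * f) = Poly_Mapping.lookup f (k+1,1,2)"
      unfolding d_def by (simp add: ev0_def lookup_single_mult, (simp add: add.commute)?)
    have e6: "ev0 d (Poly_Mapping.single (0,1,1) 1 * f) = Poly_Mapping.lookup f (k+2,0,2)"
      using z3 unfolding d_def by (simp add: ev0_def lookup_single_mult, (simp add: add.commute)?)
    show "(\<forall>\<nu>. mdeg \<nu> + (d - 1) = d + 1 \<longrightarrow> ev0 d (Poly_Mapping.single \<nu> 1 * f) = 0) \<longleftrightarrow>
        (\<forall>G\<in>E. (\<Sum>m\<in>G. Poly_Mapping.lookup f m) = 0)"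
      unfolding dg e1 e2 e3 e4 e5 e6 unfolding E_def ball_singletons Z_def by simp
  qed (use d in auto)
  then show ?thesis using cE unfolding d_def by simp
qed

lemma hilb_1: "d \<ge> 5 \<Longrightarrow> hilb3 (Jd d :: 'k::field poly3 set) 1 = 3"
proof -
  assume d: "d \<ge> 5"
  have "hilb3 (Jd d :: 'k poly3 set) 1 = 2 * 1 + 1 + card ({} :: mon3 set set)"
  proof (rule hilb_E[OF d])
    fix f :: "'k poly3"
    assume k: "Poly_Mapping.keys f \<subseteq> mons 1" and st: "\<forall>m\<in>strip 1. Poly_Mapping.lookup f m = 0"
    have "f = 0"
    proof (rule poly_mapping_eqI)
      fix k
      show "Poly_Mapping.lookup f k = Poly_Mapping.lookup 0 k"
      proof (cases "k \<in> Poly_Mapping.keys f")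
        case True
        then have "k \<in> strip 1" using k unfolding mons_def strip_def by (cases k) auto
        then show ?thesis using st by simp
      next
        case False
        then show ?thesis by (simp add: in_keys_iff)
      qed
    qed
    then show "(\<forall>\<nu>. mdeg \<nu> + 1 = d + 1 \<longrightarrow> ev0 d (Poly_Mapping.single \<nu> 1 * f) = 0) \<longleftrightarrow>
        (\<forall>G\<in>{}. (\<Sum>m\<in>G. Poly_Mapping.lookup f m) = 0)"
      by (simp add: ev0_def)
  qed (use d in auto)
  then show ?thesis by simp
qed

theorem proposition4p9:
  fixes d :: nat
  assumes "d \<ge> 5"
  shows "\<exists>I :: 'k::field_char_0 poly3 set.
           homogeneous_ideal3 I \<and> artinian3 I \<and> level3 I \<and>
           hilb3 I 1 = 3 \<and>
           hilb3 I (d - 1) > hilb3 I d \<and>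
           hilb3 I d = 2 * d + 4 \<and> hilb3 I (d + 1) = 2 * d + 4"
proof -
  obtain k where k: "d = k + 5" using assms by (metis add.commute le_Suc_ex)
  have h1: "hilb3 (Jd d :: 'k poly3 set) (d - 1) = 2 * d + 5"
    using hilb_dm1_k[of k, where 'k='k] k by simp
  have h2: "hilb3 (Jd d :: 'k poly3 set) d = 2 * d + 4"
    using hilb_d_k[of k, where 'k='k] k by simp
  have h3: "hilb3 (Jd d :: 'k poly3 set) (d + 1) = 2 * d + 4"
    using hilb_top[OF assms, where 'k='k] by simp
  have h0: "hilb3 (Jd d :: 'k poly3 set) 1 = 3"
    using hilb_1[OF assms, where 'k='k] by simp
  show ?thesis
    using homogeneous_Id[OF assms, where 'k='k] artinian_Id[OF assms, where 'k='k]
      level_Id[OF assms, where 'k='k] h0 h1 h2 h3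
    by (intro exI[of _ "Jd d :: 'k poly3 set"]) simp
qed

end
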